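(* Let $(E,\rho_\theta)$ be a $b_v(\theta)$ metric space whose function $\theta$ is bounded, let $S:E\to E$, $u_0\in E$, and let $\{u_n\}$ be defined by $u_{n+1}=Su_n$ (so $u_n=S^nu_0$), with $u_n\neq u_m$ for all distinct $n,m\in\mathbb{N}$. Assume there exist $c\in[0,1)$ and $k_1,k_2\in[0,\infty)$ such that $\rho_\theta(u_m,u_n)\le c\,\rho_\theta(u_{m-1},u_{n-1})+k_1c^m+k_2c^m$ for all $n,m\in\mathbb{N}$. Then $\{u_n\}$ is a Cauchy sequence in $(E,\rho_\theta)$.
   Context: Let $E$ be a nonempty set, $\theta:E\times E\to[1,\infty)$ a function and $v\in\mathbb{N}$. A map $\rho_\theta:E\times E\to[0,\infty)$ is a $b_v(\theta)$ metric (and $(E,\rho_\theta)$ a $b_v(\theta)$ metric space) if for all $u,w\in E$: $\rho_\theta(u,w)=0$ iff $u=w$; $\rho_\theta(u,w)=\rho_\theta(w,u)$; and for all $u,z_1,\dots,z_v,w\in E$ pairwise distinct, $\rho_\theta(u,w)\le\theta(u,w)[\rho_\theta(u,z_1)+\rho_\theta(z_1,z_2)+\dots+\rho_\theta(z_{v-1},z_v)+\rho_\theta(z_v,w)]$. A sequence $\{u_n\}$ is Cauchy if for every $\varepsilon>0$ there is $n_0\in\mathbb{N}$ with $\rho_\theta(u_n,u_{n+p})<\varepsilon$ for all $n\ge n_0$ and $p>0$. *)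

theory Defs
  imports Main "HOL-Analysis.Analysis"
begin

text \<open>A b_v(theta) metric on the carrier set E. The points u, z_1, ..., z_v, w are
  encoded as z 0 = u, z 1, ..., z v, z (v+1) = w, pairwise distinct.\<close>
definition bv_metric :: "'a set \<Rightarrow> ('a \<Rightarrow> 'a \<Rightarrow> real) \<Rightarrow> nat \<Rightarrow> ('a \<Rightarrow> 'a \<Rightarrow> real) \<Rightarrow> bool" where
  "bv_metric E \<theta> v \<rho> \<longleftrightarrow>
     E \<noteq> {} \<and> v \<ge> 1 \<and>
     (\<forall>x\<in>E. \<forall>y\<in>E. \<theta> x y \<ge> 1) \<and>
     (\<forall>x\<in>E. \<forall>y\<in>E. \<rho> x y \<ge> 0) \<and>
     (\<forall>x\<in>E. \<forall>y\<in>E. \<rho> x y = 0 \<longleftrightarrow> x = y) \<and>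
     (\<forall>x\<in>E. \<forall>y\<in>E. \<rho> x y = \<rho> y x) \<and>
     (\<forall>z :: nat \<Rightarrow> 'a. z ` {0..v+1} \<subseteq> E \<longrightarrow> inj_on z {0..v+1} \<longrightarrow>
        \<rho> (z 0) (z (v+1)) \<le> \<theta> (z 0) (z (v+1)) * (\<Sum>i\<in>{0..v}. \<rho> (z i) (z (Suc i))))"

definition bv_cauchy :: "('a \<Rightarrow> 'a \<Rightarrow> real) \<Rightarrow> (nat \<Rightarrow> 'a) \<Rightarrow> bool" where
  "bv_cauchy \<rho> u \<longleftrightarrow>
     (\<forall>\<epsilon>>0. \<exists>n0. \<forall>n\<ge>n0. \<forall>p>0. \<rho> (u n) (u (n + p)) < \<epsilon>)"

end

theory Submission
  imports Defs
begin

theorem mainTheorem8: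
  fixes E :: "'a set" and \<theta> \<rho> :: "'a \<Rightarrow> 'a \<Rightarrow> real" and v :: nat
    and S :: "'a \<Rightarrow> 'a" and u0 :: 'a and u :: "nat \<Rightarrow> 'a"
    and c k1 k2 :: real
  assumes metric: "bv_metric E \<theta> v \<rho>"
    and theta_bdd: "\<exists>K. \<forall>x\<in>E. \<forall>y\<in>E. \<theta> x y \<le> K"
    and S_maps: "\<forall>x\<in>E. S x \<in> E"
    and u0_in: "u0 \<in> E"
    and u_def: "\<forall>n. u n = (S ^^ n) u0"
    and u_distinct: "\<forall>n m. n \<noteq> m \<longrightarrow> u n \<noteq> u m"
    and c_range: "0 \<le> c" "c < 1"
    and k_nonneg: "0 \<le> k1" "0 \<le> k2"
    and contr: "\<forall>n m. 1 \<le> n \<longrightarrow> 1 \<le> m \<longrightarrow>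
        \<rho> (u m) (u n) \<le> c * \<rho> (u (m - 1)) (u (n - 1)) + k1 * c ^ m + k2 * c ^ m"
  shows "bv_cauchy \<rho> u"
proof -
  define K where "K = k1 + k2"
  have K0: "K \<ge> 0" using k_nonneg K_def by simp
  have uE: "u n \<in> E" for n
    by (induction n) (use u_def u0_in S_maps in auto)
  have v1: "v \<ge> 1" and th1: "\<And>x y. x\<in>E \<Longrightarrow> y\<in>E \<Longrightarrow> \<theta> x y \<ge> 1"
    and rpos: "\<And>x y. x\<in>E \<Longrightarrow> y\<in>E \<Longrightarrow> \<rho> x y \<ge> 0"
    and chain: "\<And>z. z ` {0..v+1} \<subseteq> E \<Longrightarrow> inj_on z {0..v+1} \<Longrightarrow>
        \<rho> (z 0) (z (v+1)) \<le> \<theta> (z 0) (z (v+1)) * (\<Sum>i\<in>{0..v}. \<rho> (z i) (z (Suc i)))"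
    using metric unfolding bv_metric_def by auto
  have rp: "\<rho> (u a) (u b) \<ge> 0" for a b using rpos uE by blast
  obtain T where T: "\<forall>x\<in>E. \<forall>y\<in>E. \<theta> x y \<le> T" using theta_bdd by blast
  have T1: "T \<ge> 1" using T th1[OF u0_in u0_in] u0_in by force
  have contr': "\<rho> (u m) (u n) \<le> c * \<rho> (u (m - 1)) (u (n - 1)) + K * c ^ m"
    if "1 \<le> n" "1 \<le> m" for m n
    using contr that unfolding K_def by (simp add: distrib_right add.assoc)
  have iter: "\<rho> (u m) (u n) \<le> c ^ j * \<rho> (u (m - j)) (u (n - j)) + real j * K * c ^ m"
    if "j \<le> m" "j \<le> n" for j m n
    using that
  proof (induction j)
    case 0 then show ?case by simp
  next
    case (Suc j)
    have "\<rho> (u (m - j)) (u (n - j)) \<le> c * \<rho> (u (m - j - 1)) (u (n - j - 1)) + K * c ^ (m - j)"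
      using contr'[of "n - j" "m - j"] Suc.prems by simp
    then have "c ^ j * \<rho> (u (m - j)) (u (n - j)) \<le>
        c ^ j * (c * \<rho> (u (m - j - 1)) (u (n - j - 1)) + K * c ^ (m - j))"
      using c_range by (simp add: mult_left_mono)
    also have "\<dots> = c ^ Suc j * \<rho> (u (m - Suc j)) (u (n - Suc j)) + K * c ^ m"
    proof -
      have "c ^ j * c ^ (m - j) = c ^ m" using Suc.prems
        by (simp add: power_add[symmetric])
      then show ?thesis by (simp add: algebra_simps)
    qed
    finally show ?case using Suc by (simp add: algebra_simps)
  qed
  obtain N where N: "c ^ N < 1 / (2 * T)"
    using real_arch_pow_inv[of "1 / (2 * T)" c] T1 c_range by auto
  define q where "q = N + v"
  have qv: "q \<ge> v" and q1: "q \<ge> 1" using v1 q_def by auto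
  have cq: "T * c ^ q \<le> 1 / 2"
  proof -
    have "c ^ q \<le> c ^ N" unfolding q_def using c_range by (simp add: power_decreasing)
    then have "c ^ q \<le> 1 / (2 * T)" using N by linarith
    then show ?thesis using T1 by (simp add: field_simps)
  qed
  define g where "g = (\<lambda>i::nat. if i < v then i else q)"
  define C where "C = (\<Sum>i\<in>{0..<v}. \<rho> (u (g i)) (u (g (Suc i))))"
  have step: "\<rho> (u 0) (u j) \<le> T * C + T * real q * K + T * c ^ q * \<rho> (u 0) (u (j - q))"
    if jq: "j > q" for j
  proof -
    define h where "h = (\<lambda>i. if i \<le> v then g i else j)"
    define z where "z = (\<lambda>i. u (h i))"
    have zE: "z ` {0..v+1} \<subseteq> E" using uE z_def by auto
    have hinj: "inj_on h {0..v+1}"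
      unfolding inj_on_def h_def g_def using jq qv by auto
    have zinj: "inj_on z {0..v+1}"
      unfolding inj_on_def z_def using hinj u_distinct unfolding inj_on_def by metis
    have z0: "z 0 = u 0" and zv: "z (v+1) = u j" and zvv: "z v = u q"
      using v1 unfolding z_def h_def g_def by auto
    have "(\<Sum>i\<in>{0..v}. \<rho> (z i) (z (Suc i))) =
        (\<Sum>i\<in>{0..<v}. \<rho> (z i) (z (Suc i))) + \<rho> (z v) (z (Suc v))"
      by (simp add: atLeastLessThanSuc_atLeastAtMost[symmetric])
    also have "(\<Sum>i\<in>{0..<v}. \<rho> (z i) (z (Suc i))) = C"
      unfolding C_def by (rule sum.cong) (auto simp: z_def h_def)
    finally have sumeq: "(\<Sum>i\<in>{0..v}. \<rho> (z i) (z (Suc i))) = C + \<rho> (u q) (u j)"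
      using zv zvv by simp
    have sp: "(\<Sum>i\<in>{0..v}. \<rho> (z i) (z (Suc i))) \<ge> 0"
      by (rule sum_nonneg) (simp add: z_def rp)
    have "\<rho> (u 0) (u j) \<le> \<theta> (u 0) (u j) * (C + \<rho> (u q) (u j))"
      using chain[OF zE zinj] z0 zv sumeq by simp
    also have "\<dots> \<le> T * (C + \<rho> (u q) (u j))"
      using T uE sp sumeq by (intro mult_right_mono) auto
    finally have A: "\<rho> (u 0) (u j) \<le> T * (C + \<rho> (u q) (u j))" .
    have B: "\<rho> (u q) (u j) \<le> c ^ q * \<rho> (u 0) (u (j - q)) + real q * K"
    proof -
      have "\<rho> (u q) (u j) \<le> c ^ q * \<rho> (u (q - q)) (u (j - q)) + real q * K * c ^ q"
        using iter[of q q j] jq by simp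
      moreover have "real q * K * c ^ q \<le> real q * K"
        using K0 c_range by (simp add: mult_left_le power_le_one)
      ultimately show ?thesis by simp
    qed
    have "T * \<rho> (u q) (u j) \<le> T * (c ^ q * \<rho> (u 0) (u (j - q)) + real q * K)"
      using B T1 by (simp add: mult_left_mono)
    with A show ?thesis by (simp add: algebra_simps)
  qed
  define B where "B = max (Max ((\<lambda>j. \<rho> (u 0) (u j)) ` {..q})) (2 * (T * C + T * real q * K))"
  have bnd: "\<rho> (u 0) (u j) \<le> B" for j
  proof (induction j rule: less_induct)
    case (less j)
    show ?case
    proof (cases "j \<le> q")
      case True
      then have "\<rho> (u 0) (u j) \<le> Max ((\<lambda>j. \<rho> (u 0) (u j)) ` {..q})"
        by (intro Max_ge) auto
      then show ?thesis unfolding B_def by linarith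
    next
      case False
      then have jq: "j > q" by simp
      have IH: "\<rho> (u 0) (u (j - q)) \<le> B" using less.IH[of "j - q"] jq q1 by simp
      have "T * c ^ q * \<rho> (u 0) (u (j - q)) \<le> 1/2 * \<rho> (u 0) (u (j - q))"
        using mult_right_mono[OF cq rp] by simp
      also have "\<dots> \<le> 1/2 * B" using IH by simp
      finally have "\<rho> (u 0) (u j) \<le> T * C + T * real q * K + 1/2 * B"
        using step[OF jq] by linarith
      moreover have "2 * (T * C + T * real q * K) \<le> B" unfolding B_def by simp
      ultimately have "\<rho> (u 0) (u j) \<le> B"
        using field_sum_of_halves[of B] by (simp add: algebra_simps)
      then show ?thesis by simp
    qed
  qed
  have lim: "(\<lambda>n. c ^ n * B + K * (of_nat n * c ^ n)) \<longlonglongrightarrow> 0"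
  proof -
    have "(\<lambda>n. c ^ n * B + K * (of_nat n * c ^ n)) \<longlonglongrightarrow> 0 * B + K * 0"
      using c_range
      by (intro tendsto_intros LIMSEQ_power_zero powser_times_n_limit_0) auto
    then show ?thesis by simp
  qed
  show ?thesis unfolding bv_cauchy_def
  proof (intro allI impI)
    fix \<epsilon> :: real assume e: "\<epsilon> > 0"
    from order_tendstoD(2)[OF lim e] obtain n0 where
      n0: "\<forall>n\<ge>n0. c ^ n * B + K * (of_nat n * c ^ n) < \<epsilon>"
      unfolding eventually_sequentially by blast
    show "\<exists>n0. \<forall>n\<ge>n0. \<forall>p>0. \<rho> (u n) (u (n + p)) < \<epsilon>"
    proof (intro exI allI impI)
      fix n p :: nat assume n: "n \<ge> n0" and p: "p > 0"
      have "\<rho> (u n) (u (n + p)) \<le> c ^ n * \<rho> (u (n - n)) (u (n + p - n)) + real n * K * c ^ n"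
        using iter[of n n "n + p"] by simp
      also have "\<dots> \<le> c ^ n * B + K * (of_nat n * c ^ n)"
        using mult_left_mono[OF bnd[of p] zero_le_power[OF c_range(1), of n]]
        by (simp add: algebra_simps)
      also have "\<dots> < \<epsilon>" using n0 n by blast
      finally show "\<rho> (u n) (u (n + p)) < \<epsilon>" .
    qed
  qed
qed

end
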